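(* Let $n\ge1$. The Zariski closure of the boundary of the cone of $n\times n$ real symmetric copositive matrices (equivalently, of $\partial\mathcal C_{n,2}$ via $f(x)=x^TAx$) is the hypersurface $$\Big\{A=A^T:\ \prod_{\emptyset\ne I\subseteq[n]}\det A(I,I)=0\Big\}.$$
   Context: A real symmetric $n\times n$ matrix $A$ is copositive if $x^TAx\ge0$ for all $x\in\mathbb R^n_+$; $\mathcal C_{n,2}$ denotes the cone of copositive quadratic forms. $A(I,I)$ is the principal submatrix of $A$ with row and column indices in $I\subseteq[n]=\{1,\dots,n\}$. The Zariski closure of a set of symmetric matrices is the smallest complex algebraic variety in the space of complex symmetric matrices containing it. *)

theory Defs
  imports Complex_Main "Jordan_Normal_Form.Determinant" "Jordan_Normal_Form.DL_Submatrix"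
begin

definition sym_real :: "nat \<Rightarrow> real mat set" where
  "sym_real n = {A. A \<in> carrier_mat n n \<and> A\<^sup>T = A}"

definition copositive :: "nat \<Rightarrow> real mat \<Rightarrow> bool" where
  "copositive n A \<longleftrightarrow> (\<forall>x \<in> carrier_vec n. (\<forall>i<n. x $ i \<ge> 0) \<longrightarrow> x \<bullet> (A *\<^sub>v x) \<ge> 0)"

definition cop_cone :: "nat \<Rightarrow> real mat set" where
  "cop_cone n = {A \<in> sym_real n. copositive n A}"

definition sym_boundary :: "nat \<Rightarrow> real mat set \<Rightarrow> real mat set" where
  "sym_boundary n S = {A \<in> sym_real n. \<forall>e>0.
      (\<exists>B\<in>S. \<forall>i<n. \<forall>j<n. \<bar>B $$ (i,j) - A $$ (i,j)\<bar> < e) \<and>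
      (\<exists>B\<in>sym_real n - S. \<forall>i<n. \<forall>j<n. \<bar>B $$ (i,j) - A $$ (i,j)\<bar> < e)}"

definition sym_complex :: "nat \<Rightarrow> complex mat set" where
  "sym_complex n = {A. A \<in> carrier_mat n n \<and> A\<^sup>T = A}"

inductive_set poly_fun :: "nat \<Rightarrow> (complex mat \<Rightarrow> complex) set" for n where
  const: "(\<lambda>A. c) \<in> poly_fun n"
| var: "i < n \<Longrightarrow> j < n \<Longrightarrow> (\<lambda>A. A $$ (i,j)) \<in> poly_fun n"
| add: "p \<in> poly_fun n \<Longrightarrow> q \<in> poly_fun n \<Longrightarrow> (\<lambda>A. p A + q A) \<in> poly_fun n"
| mult: "p \<in> poly_fun n \<Longrightarrow> q \<in> poly_fun n \<Longrightarrow> (\<lambda>A. p A * q A) \<in> poly_fun n"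

definition zariski_closed :: "nat \<Rightarrow> complex mat set \<Rightarrow> bool" where
  "zariski_closed n V \<longleftrightarrow>
     (\<exists>P \<subseteq> poly_fun n. V = {A \<in> sym_complex n. \<forall>p\<in>P. p A = 0})"

definition zariski_closure :: "nat \<Rightarrow> complex mat set \<Rightarrow> complex mat set" where
  "zariski_closure n S = \<Inter> {V. zariski_closed n V \<and> S \<subseteq> V}"

end

theory Submission imports Defs "HOL-Analysis.Function_Topology" begin

lemma pick_bij:
  assumes "finite I"
  shows "bij_betw (pick I) {..<card I} I"
proof -
  have inj: "inj_on (pick I) {..<card I}"
    by (rule linorder_inj_onI) (auto dest: pick_mono_le)
  have sub: "pick I ` {..<card I} \<subseteq> I" using pick_in_set_le by auto
  have "card (pick I ` {..<card I}) = card I" using card_image[OF inj] by simp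
  then have "pick I ` {..<card I} = I" using card_subset_eq[OF assms sub] by simp
  then show ?thesis using inj by (simp add: bij_betw_def)
qed

lemma mult_mat_vec_sum:
  assumes "B \<in> carrier_mat m m" "v \<in> carrier_vec m" "a < m"
  shows "(B *\<^sub>v v) $ a = (\<Sum>b<m. B $$ (a,b) * v $ b)"
  proof -
  have "(B *\<^sub>v v) $ a = Matrix.row B a \<bullet> v" using assms by simp
  also have "\<dots> = (\<Sum>b\<in>{0..<m}. Matrix.row B a $ b * v $ b)" using assms unfolding scalar_prod_def by simp
  also have "\<dots> = (\<Sum>b<m. B $$ (a,b) * v $ b)" using assms by (intro sum.cong) auto
  finally show ?thesis .
qed

lemma submatrix_carrier:
  assumes "A \<in> carrier_mat n n" "I \<subseteq> {..<n}"
  shows "submatrix A I I \<in> carrier_mat (card I) (card I)"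
proof -
  have e: "{i. i < n \<and> i \<in> I} = I" using assms(2) by auto
  have "dim_row A = n" "dim_col A = n" using assms(1) by auto
  then have "dim_row (submatrix A I I) = card I" "dim_col (submatrix A I I) = card I"
    by (simp_all only: dim_submatrix e)
  then show ?thesis unfolding carrier_mat_def by simp
qed

lemma det_sub_zero_iff:
  fixes A :: "'a::field mat"
  assumes A: "A \<in> carrier_mat n n" and I: "I \<subseteq> {..<n}"
  shows "det (submatrix A I I) = 0 \<longleftrightarrow>
    (\<exists>u. (\<exists>j\<in>I. u j \<noteq> 0) \<and> (\<forall>i\<in>I. (\<Sum>j\<in>I. A $$ (i,j) * u j) = 0))"
proof -
  let ?m = "card I"
  let ?S = "submatrix A I I"
  have fin: "finite I" using I finite_subset by blast
  have bij: "bij_betw (pick I) {..<?m} I" by (rule pick_bij[OF fin])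
  have S: "?S \<in> carrier_mat ?m ?m" by (rule submatrix_carrier[OF A I])
  have setI: "{i. i < dim_row A \<and> i \<in> I} = I" "{i. i < dim_col A \<and> i \<in> I} = I" using I A by auto
  have ent: "?S $$ (a,b) = A $$ (pick I a, pick I b)" if "a < ?m" "b < ?m" for a b
  proof -
    have "a < card {i. i < dim_row A \<and> i \<in> I}" "b < card {i. i < dim_col A \<and> i \<in> I}"
      using that unfolding setI by auto
    then show ?thesis by (rule submatrix_index)
  qed
  have sumre: "(\<Sum>b<?m. f (pick I b)) = (\<Sum>j\<in>I. f j)" for f :: "nat \<Rightarrow> 'a"
    using sum.reindex_bij_betw[OF bij] by blast
  have pin: "a < ?m \<Longrightarrow> pick I a \<in> I" for a using bij by (auto simp: bij_betw_def)
  have surj: "i \<in> I \<Longrightarrow> \<exists>a<?m. i = pick I a" for i using bij by (auto simp: bij_betw_def)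
  show ?thesis
  proof
    assume "det ?S = 0"
    then obtain v where v: "v \<in> carrier_vec ?m" "v \<noteq> 0\<^sub>v ?m" "?S *\<^sub>v v = 0\<^sub>v ?m"
      using det_0_iff_vec_prod_zero[OF S] by auto
    define u where "u j = v $ (card {a\<in>I. a<j})" for j
    have up: "u (pick I b) = v $ b" if "b < ?m" for b
      using card_pick_le[OF that] by (simp add: u_def)
    obtain b where b: "b < ?m" "v $ b \<noteq> 0" using v(1,2) by (auto simp: vec_eq_iff)
    have "\<exists>j\<in>I. u j \<noteq> 0" using b up pin by metis
    moreover have "(\<Sum>j\<in>I. A $$ (i,j) * u j) = 0" if iI: "i \<in> I" for i
    proof -
      obtain a where a: "a < ?m" "i = pick I a" using surj[OF iI] by auto
      have "0 = (?S *\<^sub>v v) $ a" using v(3) a by simp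
      also have "\<dots> = (\<Sum>b<?m. ?S $$ (a,b) * v $ b)" by (rule mult_mat_vec_sum[OF S v(1) a(1)])
      also have "\<dots> = (\<Sum>b<?m. A $$ (i, pick I b) * u (pick I b))"
        by (rule sum.cong) (auto simp: ent a up)
      also have "\<dots> = (\<Sum>j\<in>I. A $$ (i,j) * u j)" by (rule sumre)
      finally show ?thesis by simp
    qed
    ultimately show "\<exists>u. (\<exists>j\<in>I. u j \<noteq> 0) \<and> (\<forall>i\<in>I. (\<Sum>j\<in>I. A $$ (i,j) * u j) = 0)" by blast
  next
    assume "\<exists>u. (\<exists>j\<in>I. u j \<noteq> 0) \<and> (\<forall>i\<in>I. (\<Sum>j\<in>I. A $$ (i,j) * u j) = 0)"
    then obtain u where u: "\<exists>j\<in>I. u j \<noteq> 0" "\<And>i. i\<in>I \<Longrightarrow> (\<Sum>j\<in>I. A $$ (i,j) * u j) = 0" by blast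
    define v where "v = Matrix.vec ?m (\<lambda>b. u (pick I b))"
    have vc: "v \<in> carrier_vec ?m" by (simp add: v_def)
    have "v \<noteq> 0\<^sub>v ?m"
    proof
      assume "v = 0\<^sub>v ?m"
      from u(1) obtain j where j: "j \<in> I" "u j \<noteq> 0" by blast
      obtain a where a: "a < ?m" "j = pick I a" using surj[OF j(1)] by auto
      have "v $ a = 0" using \<open>v = 0\<^sub>v ?m\<close> a by simp
      then show False using a j by (simp add: v_def)
    qed
    moreover have "?S *\<^sub>v v = 0\<^sub>v ?m"
    proof (rule eq_vecI)
      fix a assume a: "a < dim_vec (0\<^sub>v ?m :: 'a vec)"
      then have a': "a < ?m" by simp
      have "(?S *\<^sub>v v) $ a = (\<Sum>b<?m. ?S $$ (a,b) * v $ b)" by (rule mult_mat_vec_sum[OF S vc a'])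
      also have "\<dots> = (\<Sum>b<?m. A $$ (pick I a, pick I b) * u (pick I b))"
        by (rule sum.cong) (auto simp: ent a' v_def)
      also have "\<dots> = (\<Sum>j\<in>I. A $$ (pick I a, j) * u j)" by (rule sumre)
      also have "\<dots> = 0" using u(2) pin[OF a'] by simp
      finally show "(?S *\<^sub>v v) $ a = 0\<^sub>v ?m $ a" using a' by simp
    qed (use S in simp)
    ultimately show "det ?S = 0" using det_0_iff_vec_prod_zero[OF S] vc by blast
  qed
qed

lemma sub_ent:
  assumes A: "A \<in> carrier_mat n n" and I: "I \<subseteq> {..<n}" and "a < card I" "b < card I"
  shows "submatrix A I I $$ (a,b) = A $$ (pick I a, pick I b)"
proof -
  have setI: "{i. i < dim_row A \<and> i \<in> I} = I" "{i. i < dim_col A \<and> i \<in> I} = I" using I A by auto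
  have "a < card {i. i < dim_row A \<and> i \<in> I}" "b < card {i. i < dim_col A \<and> i \<in> I}"
    using assms unfolding setI by auto
  then show ?thesis by (rule submatrix_index)
qed

lemma poly_fun_sum:
  "finite F \<Longrightarrow> (\<And>x. x\<in>F \<Longrightarrow> g x \<in> poly_fun n) \<Longrightarrow> (\<lambda>A. \<Sum>x\<in>F. g x A) \<in> poly_fun n"
proof (induction F rule: finite_induct)
  case empty
  then show ?case using poly_fun.const[of 0 n] by simp
next
  case (insert x F)
  then show ?case using poly_fun.add[of "g x" n "\<lambda>A. \<Sum>x\<in>F. g x A"] by simp
qed

lemma poly_fun_prod:
  "finite F \<Longrightarrow> (\<And>x. x\<in>F \<Longrightarrow> g x \<in> poly_fun n) \<Longrightarrow> (\<lambda>A. \<Prod>x\<in>F. g x A) \<in> poly_fun n"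
proof (induction F rule: finite_induct)
  case empty
  then show ?case using poly_fun.const[of 1 n] by simp
next
  case (insert x F)
  then show ?case using poly_fun.mult[of "g x" n "\<lambda>A. \<Prod>x\<in>F. g x A"] by simp
qed

definition detpoly :: "nat set \<Rightarrow> complex mat \<Rightarrow> complex" where
  "detpoly I A = (\<Sum>p | p permutes {0..<card I}.
     of_int (sign p) * (\<Prod>i = 0..<card I. A $$ (pick I i, pick I (p i))))"

lemma detpoly_poly:
  assumes I: "I \<subseteq> {..<n}"
  shows "detpoly I \<in> poly_fun n"
proof -
  have fin: "finite I" using I finite_subset by blast
  have bij: "bij_betw (pick I) {..<card I} I" by (rule pick_bij[OF fin])
  have pin: "a < card I \<Longrightarrow> pick I a < n" for a using bij I by (auto simp: bij_betw_def)
  have "(\<lambda>A. \<Sum>p\<in>{p. p permutes {0..<card I}}.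
     of_int (sign p) * (\<Prod>i = 0..<card I. A $$ (pick I i, pick I (p i)))) \<in> poly_fun n"
  proof (rule poly_fun_sum)
    show "finite {p. p permutes {0..<card I}}" by (rule finite_permutations) simp
    fix p assume "p \<in> {p. p permutes {0..<card I}}"
    then have p: "p permutes {0..<card I}" by simp
    have pi: "i < card I \<Longrightarrow> p i < card I" for i using permutes_in_image[OF p] by auto
    have "(\<lambda>A. \<Prod>i = 0..<card I. A $$ (pick I i, pick I (p i))) \<in> poly_fun n"
      by (rule poly_fun_prod) (auto intro!: poly_fun.var pin pi)
    then show "(\<lambda>A. of_int (sign p) * (\<Prod>i = 0..<card I. A $$ (pick I i, pick I (p i)))) \<in> poly_fun n"
      using poly_fun.mult[OF poly_fun.const[of "of_int (sign p)" n]] by blast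
  qed
  then show ?thesis unfolding detpoly_def[abs_def] by simp
qed

lemma detpoly_eq:
  assumes A: "A \<in> carrier_mat n n" and I: "I \<subseteq> {..<n}"
  shows "detpoly I A = det (submatrix A I I)"
  unfolding det_def'[OF submatrix_carrier[OF A I]] detpoly_def
  by (intro sum.cong refl arg_cong2[where f = "(*)"] prod.cong)
     (auto simp: sub_ent[OF A I] permutes_in_image)

abbreviation Isets :: "nat \<Rightarrow> nat set set" where
  "Isets n \<equiv> {I. I \<subseteq> {..<n} \<and> I \<noteq> {}}"

lemma finite_Isets: "finite (Isets n)"
  by (rule finite_subset[of _ "Pow {..<n}"]) auto

lemma H_closed:
  "zariski_closed n {A \<in> sym_complex n. (\<Prod>I \<in> Isets n. det (submatrix A I I)) = 0}"
proof -
  define f where "f = (\<lambda>A. \<Prod>I \<in> Isets n. detpoly I A)"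
  have fp: "f \<in> poly_fun n" unfolding f_def
    by (rule poly_fun_prod[OF finite_Isets]) (auto intro: detpoly_poly)
  have "{A \<in> sym_complex n. (\<Prod>I \<in> Isets n. det (submatrix A I I)) = 0} =
        {A \<in> sym_complex n. \<forall>p\<in>{f}. p A = 0}"
  proof (intro Collect_cong conj_cong refl)
    fix A assume "A \<in> sym_complex n"
    then have A: "A \<in> carrier_mat n n" by (simp add: sym_complex_def)
    show "((\<Prod>I \<in> Isets n. det (submatrix A I I)) = 0) = (\<forall>p\<in>{f}. p A = 0)"
      unfolding f_def using detpoly_eq[OF A] by (simp cong: prod.cong)
  qed
  then show ?thesis unfolding zariski_closed_def using fp by blast
qed

definition bil :: "nat \<Rightarrow> real mat \<Rightarrow> (nat \<Rightarrow> real) \<Rightarrow> (nat \<Rightarrow> real) \<Rightarrow> real" where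
  "bil n A x y = (\<Sum>i<n. \<Sum>j<n. x i * A $$ (i,j) * y j)"

lemma bil_row: "bil n A x y = (\<Sum>i<n. x i * (\<Sum>j<n. A $$ (i,j) * y j))"
  unfolding bil_def by (simp add: sum_distrib_left mult.assoc)

lemma qf_eq:
  assumes A: "A \<in> carrier_mat n n" and x: "x \<in> carrier_vec n"
  shows "x \<bullet> (A *\<^sub>v x) = bil n A (\<lambda>i. x$i) (\<lambda>i. x$i)"
proof -
  have "x \<bullet> (A *\<^sub>v x) = (\<Sum>i\<in>{0..<n}. x $ i * (A *\<^sub>v x) $ i)"
    using A unfolding scalar_prod_def by simp
  also have "\<dots> = (\<Sum>i<n. x $ i * (\<Sum>j<n. A $$ (i,j) * x $ j))"
    by (intro sum.cong) (auto simp: mult_mat_vec_sum[OF A x])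
  finally show ?thesis by (simp add: bil_row)
qed

lemma bil_cong:
  "(\<And>i. i<n \<Longrightarrow> x i = x' i) \<Longrightarrow> (\<And>i. i<n \<Longrightarrow> y i = y' i) \<Longrightarrow> bil n A x y = bil n A x' y'"
  unfolding bil_def by (intro sum.cong) auto

lemma bil_add_left: "bil n A (\<lambda>i. x i + y i) z = bil n A x z + bil n A y z"
  unfolding bil_def by (simp add: algebra_simps sum.distrib)

lemma bil_add_right: "bil n A z (\<lambda>i. x i + y i) = bil n A z x + bil n A z y"
  unfolding bil_def by (simp add: algebra_simps sum.distrib)

lemma bil_scale_left: "bil n A (\<lambda>i. c * x i) z = c * bil n A x z"
  unfolding bil_def by (simp add: algebra_simps sum_distrib_left)

lemma bil_scale_right: "bil n A z (\<lambda>i. c * x i) = c * bil n A z x"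
  unfolding bil_def by (simp add: algebra_simps sum_distrib_left)

lemma bil_sym:
  assumes "\<And>i j. i<n \<Longrightarrow> j<n \<Longrightarrow> A $$ (i,j) = A $$ (j,i)"
  shows "bil n A x y = bil n A y x"
proof -
  have "bil n A x y = (\<Sum>j<n. \<Sum>i<n. x i * A $$ (i,j) * y j)" unfolding bil_def by (rule sum.swap)
  also have "\<dots> = bil n A y x" unfolding bil_def
    by (intro sum.cong refl) (auto simp: assms mult.commute mult.left_commute)
  finally show ?thesis .
qed

lemma sym_real_sym:
  assumes "A \<in> sym_real n" "i < n" "j < n"
  shows "A $$ (i,j) = A $$ (j,i)"
proof -
  have A: "A \<in> carrier_mat n n" "A\<^sup>T = A" using assms(1) by (auto simp: sym_real_def)
  have "A\<^sup>T $$ (i,j) = A $$ (j,i)" using A(1) assms(2,3) by simp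
  then show ?thesis using A(2) by simp
qed

lemma copositive_iff:
  assumes A: "A \<in> carrier_mat n n"
  shows "copositive n A \<longleftrightarrow> (\<forall>x. (\<forall>i<n. 0 \<le> x i) \<longrightarrow> 0 \<le> bil n A x x)"
proof
  assume c: "copositive n A"
  show "\<forall>x. (\<forall>i<n. 0 \<le> x i) \<longrightarrow> 0 \<le> bil n A x x"
  proof (intro allI impI)
    fix x :: "nat \<Rightarrow> real" assume x: "\<forall>i<n. 0 \<le> x i"
    let ?v = "Matrix.vec n x"
    have "0 \<le> ?v \<bullet> (A *\<^sub>v ?v)" using c x unfolding copositive_def by auto
    also have "?v \<bullet> (A *\<^sub>v ?v) = bil n A x x"
      unfolding qf_eq[OF A vec_carrier] by (rule bil_cong) auto
    finally show "0 \<le> bil n A x x" .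
  qed
next
  assume c: "\<forall>x. (\<forall>i<n. 0 \<le> x i) \<longrightarrow> 0 \<le> bil n A x x"
  show "copositive n A" unfolding copositive_def
  proof (intro ballI impI)
    fix x :: "real vec" assume x: "x \<in> carrier_vec n" "\<forall>i<n. 0 \<le> x $ i"
    show "0 \<le> x \<bullet> (A *\<^sub>v x)" unfolding qf_eq[OF A x(1)] using c x(2) by blast
  qed
qed

lemma bil_diff_bound:
  assumes "\<And>i j. i<n \<Longrightarrow> j<n \<Longrightarrow> \<bar>B $$ (i,j) - A $$ (i,j)\<bar> \<le> e"
  shows "\<bar>bil n B x x - bil n A x x\<bar> \<le> e * (\<Sum>i<n. \<bar>x i\<bar>)^2"
proof -
  have "bil n B x x - bil n A x x = (\<Sum>i<n. \<Sum>j<n. x i * (B $$ (i,j) - A $$ (i,j)) * x j)"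
    unfolding bil_def by (simp add: sum_subtractf algebra_simps)
  also have "\<bar>\<dots>\<bar> \<le> (\<Sum>i<n. \<Sum>j<n. \<bar>x i * (B $$ (i,j) - A $$ (i,j)) * x j\<bar>)"
    by (rule order_trans[OF sum_abs]) (intro sum_mono sum_abs)
  also have "\<dots> \<le> (\<Sum>i<n. \<Sum>j<n. \<bar>x i\<bar> * e * \<bar>x j\<bar>)"
    by (intro sum_mono) (auto simp: abs_mult intro!: mult_right_mono mult_left_mono assms)
  also have "\<dots> = e * (\<Sum>i<n. \<bar>x i\<bar>)^2"
    by (simp add: power2_eq_square sum_product algebra_simps sum_distrib_left)
  finally show ?thesis .
qed

lemma boundary_copositive:
  assumes A: "A \<in> sym_boundary n (cop_cone n)"
  shows "copositive n A"
proof (rule ccontr)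
  assume nc: "\<not> copositive n A"
  have As: "A \<in> sym_real n" using A by (simp add: sym_boundary_def)
  then have Ac: "A \<in> carrier_mat n n" by (simp add: sym_real_def)
  obtain x where x: "\<forall>i<n. 0 \<le> x i" "bil n A x x < 0"
    using nc unfolding copositive_iff[OF Ac] not_all not_imp not_le by blast
  define s where "s = (\<Sum>i<n. \<bar>x i\<bar>)^2 + 1"
  have s: "s > 0" "(\<Sum>i<n. \<bar>x i\<bar>)^2 < s" unfolding s_def by (auto intro: add_nonneg_pos)
  define e where "e = - bil n A x x / s"
  have e: "e > 0" unfolding e_def using x s by (simp add: divide_neg_pos)
  obtain B where B: "B \<in> cop_cone n" "\<forall>i<n. \<forall>j<n. \<bar>B $$ (i,j) - A $$ (i,j)\<bar> < e"
    using A e unfolding sym_boundary_def by blast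
  have Bc: "B \<in> carrier_mat n n" "copositive n B" using B(1) by (auto simp: cop_cone_def sym_real_def)
  have "0 \<le> bil n B x x" using Bc copositive_iff[OF Bc(1)] x by blast
  moreover have "\<bar>bil n B x x - bil n A x x\<bar> \<le> e * (\<Sum>i<n. \<bar>x i\<bar>)^2"
    by (rule bil_diff_bound) (use B(2) in force)
  moreover have "e * (\<Sum>i<n. \<bar>x i\<bar>)^2 < e * s" using e s by (intro mult_strict_left_mono) auto
  moreover have "e * s = - bil n A x x" unfolding e_def using s by simp
  ultimately show False using x(2) by linarith
qed

lemma continuous_on_coord [continuous_intros]:
  "continuous_on S (\<lambda>x::nat \<Rightarrow> real. x i)"
  by (rule continuous_on_subset[OF continuous_on_product_coordinates]) simp

lemma boundary_zero:
  assumes A: "A \<in> sym_boundary n (cop_cone n)" and n: "n \<ge> 1"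
  shows "\<exists>x. (\<forall>i<n. 0 \<le> x i) \<and> (\<exists>i<n. x i \<noteq> 0) \<and> bil n A x x = 0"
proof -
  have As: "A \<in> sym_real n" using A by (simp add: sym_boundary_def)
  then have Ac: "A \<in> carrier_mat n n" by (simp add: sym_real_def)
  have cop: "\<And>x. (\<forall>i<n. 0 \<le> x i) \<Longrightarrow> 0 \<le> bil n A x x"
    using boundary_copositive[OF A] copositive_iff[OF Ac] by blast
  define S :: "nat \<Rightarrow> real set" where "S i = (if i < n then {0..1} else {0})" for i
  define D where "D = Pi\<^sub>E UNIV S \<inter> {x. (\<Sum>i<n. x i) = 1}"
  have "compactin (product_topology (\<lambda>i. euclidean) UNIV) (Pi\<^sub>E UNIV S)"
    unfolding compactin_PiE by (auto simp: S_def)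
  then have "compact (Pi\<^sub>E UNIV S)" unfolding euclidean_product_topology by simp
  moreover have "closed {x::nat\<Rightarrow>real. (\<Sum>i<n. x i) = 1}"
    by (rule closed_Collect_eq) (intro continuous_intros)+
  ultimately have cD: "compact D" unfolding D_def by blast
  define e0 :: "nat \<Rightarrow> real" where "e0 i = (if i = 0 then 1 else 0)" for i
  have "e0 \<in> D" using n unfolding D_def e0_def S_def by (auto simp: PiE_UNIV_domain)
  then have neD: "D \<noteq> {}" by blast
  have "continuous_on D (\<lambda>x. bil n A x x)" unfolding bil_def by (intro continuous_intros)
  then obtain x0 where x0: "x0 \<in> D" "\<And>y. y \<in> D \<Longrightarrow> bil n A x0 x0 \<le> bil n A y y"
    using continuous_attains_inf[OF cD neD] by blast
  have x0S: "x0 i \<in> S i" for i using x0(1) unfolding D_def by (auto simp: PiE_UNIV_domain)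
  have x0p: "\<forall>i<n. 0 \<le> x0 i" "(\<Sum>i<n. x0 i) = 1"
  proof -
    show "\<forall>i<n. 0 \<le> x0 i" using x0S unfolding S_def by (metis atLeastAtMost_iff)
    show "(\<Sum>i<n. x0 i) = 1" using x0(1) unfolding D_def by simp
  qed
  have x0nz: "\<exists>i<n. x0 i \<noteq> 0"
  proof (rule ccontr)
    assume "\<not> (\<exists>i<n. x0 i \<noteq> 0)"
    then have "(\<Sum>i<n. x0 i) = 0" by simp
    then show False using x0p by simp
  qed
  show ?thesis
  proof (cases "bil n A x0 x0 = 0")
    case True
    then show ?thesis using x0p x0nz by blast
  next
    case False
    define c where "c = bil n A x0 x0"
    have c: "c > 0" using False cop[OF x0p(1)] unfolding c_def by simp
    obtain B where B: "B \<in> sym_real n - cop_cone n" "\<forall>i<n. \<forall>j<n. \<bar>B $$ (i,j) - A $$ (i,j)\<bar> < c/2"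
    proof -
      have "c/2 > 0" using c by simp
      then show ?thesis using A that unfolding sym_boundary_def by blast
    qed
    have Bc: "B \<in> carrier_mat n n" "\<not> copositive n B" using B(1) by (auto simp: cop_cone_def sym_real_def)
    obtain y where y: "\<forall>i<n. 0 \<le> y i" "bil n B y y < 0"
      using Bc(2) unfolding copositive_iff[OF Bc(1)] not_all not_imp not_le by blast
    define s where "s = (\<Sum>i<n. y i)"
    have s0: "s \<ge> 0" unfolding s_def using y(1) by (intro sum_nonneg) auto
    have "s \<noteq> 0"
    proof
      assume "s = 0"
      then have "\<forall>i<n. y i = 0" using y(1) sum_nonneg_eq_0_iff[of "{..<n}" y] unfolding s_def by auto
      then have "bil n B y y = bil n B (\<lambda>i. 0) (\<lambda>i. 0)" by (intro bil_cong) auto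
      also have "\<dots> = 0" by (simp add: bil_def)
      finally show False using y(2) by simp
    qed
    with s0 have s: "s > 0" by simp
    define z where "z i = (if i < n then y i / s else 0)" for i
    have zD: "z \<in> D" unfolding D_def S_def z_def
    proof (auto simp: PiE_UNIV_domain Pi_iff)
      fix i assume "i < n"
      show "0 \<le> y i / s" using y(1) s \<open>i<n\<close> by simp
      have "y i \<le> s" unfolding s_def using y(1) \<open>i<n\<close>
        by (intro member_le_sum) auto
      then show "y i / s \<le> 1" using s by simp
    next
      have "(\<Sum>i<n. y i / s) = (\<Sum>i<n. y i) / s" by (rule sum_divide_distrib[symmetric])
      also have "\<dots> = 1" using s unfolding s_def by simp
      finally show "(\<Sum>i<n. y i / s) = 1" .
    qed
    have "bil n B z z = bil n B (\<lambda>i. (1/s) * y i) (\<lambda>i. (1/s) * y i)"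
      by (intro bil_cong) (auto simp: z_def)
    also have "\<dots> = (1/s) * ((1/s) * bil n B y y)" by (simp only: bil_scale_left bil_scale_right)
    also have "\<dots> < 0" using y(2) s by (intro mult_pos_neg) auto
    finally have "bil n B z z < 0" .
    moreover have "c \<le> bil n A z z" using x0(2)[OF zD] unfolding c_def .
    moreover have "\<bar>bil n B z z - bil n A z z\<bar> \<le> c/2 * (\<Sum>i<n. \<bar>z i\<bar>)^2"
      by (rule bil_diff_bound) (use B(2) in force)
    moreover have "(\<Sum>i<n. \<bar>z i\<bar>) = 1"
    proof -
      have "(\<Sum>i<n. \<bar>z i\<bar>) = (\<Sum>i<n. z i)"
        by (intro sum.cong) (use y(1) s in \<open>auto simp: z_def\<close>)
      then show ?thesis using zD unfolding D_def by simp
    qed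
    ultimately show ?thesis using c by simp
  qed
qed

lemma boundary_gradient:
  assumes As: "A \<in> sym_real n" and cop: "copositive n A"
    and x: "\<forall>i<n. 0 \<le> x i" "bil n A x x = 0" and j: "j < n" "x j > 0"
  shows "(\<Sum>l<n. A $$ (j,l) * x l) = 0"
proof (rule ccontr)
  assume gne: "(\<Sum>l<n. A $$ (j,l) * x l) \<noteq> 0"
  define g where "g = (\<Sum>l<n. A $$ (j,l) * x l)"
  define a where "a = A $$ (j,j)"
  have Ac: "A \<in> carrier_mat n n" using As by (simp add: sym_real_def)
  have sym: "\<And>i k. i<n \<Longrightarrow> k<n \<Longrightarrow> A $$ (i,k) = A $$ (k,i)" using sym_real_sym[OF As] by blast
  define d :: "nat \<Rightarrow> real" where "d i = (if i = j then 1 else 0)" for i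
  have "bil n A x d = (\<Sum>i<n. x i * A $$ (i,j))"
    unfolding bil_def d_def using j(1) by (simp add: if_distrib cong: if_cong)
  also have "\<dots> = g" unfolding g_def
  proof (intro sum.cong refl)
    fix i assume "i \<in> {..<n}"
    then have "A $$ (i,j) = A $$ (j,i)" using sym j(1) by simp
    then show "x i * A $$ (i,j) = A $$ (j,i) * x i" by simp
  qed
  finally have bxd: "bil n A x d = g" .
  have bdx: "bil n A d x = g" using bil_sym[OF sym, where x=d and y=x] bxd by simp
  have dd: "d i * A $$ (i,k) * d k = (if i = j then (if k = j then a else 0) else 0)" for i k
    by (simp add: d_def a_def)
  have inner: "(\<Sum>k<n. if i = j then (if k = j then a else 0) else 0) = (if i = j then a else 0)" for i
    using j(1) by auto
  have bdd: "bil n A d d = a" unfolding bil_def dd inner using j(1) by simp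
  have expand: "bil n A (\<lambda>i. x i + t * d i) (\<lambda>i. x i + t * d i) = 2 * t * g + t^2 * a" for t
  proof -
    have "bil n A (\<lambda>i. x i + t * d i) (\<lambda>i. x i + t * d i) =
      bil n A x x + t * bil n A x d + (t * bil n A d x + t * (t * bil n A d d))"
      by (simp only: bil_add_left bil_add_right bil_scale_left bil_scale_right add.assoc)
    also have "\<dots> = 2 * t * g + t^2 * a" unfolding bxd bdx bdd x(2)
      by (simp add: power2_eq_square algebra_simps)
    finally show ?thesis .
  qed
  have gnz: "g \<noteq> 0" using gne g_def by simp
  define s where "s = min (x j) (\<bar>g\<bar> / (\<bar>a\<bar> + 1))"
  have a1: "\<bar>a\<bar> + 1 > 0" by (simp add: add_nonneg_pos)
  have gp: "\<bar>g\<bar> / (\<bar>a\<bar> + 1) > 0" using gnz a1 by (intro divide_pos_pos) auto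
  have s: "s > 0" "s \<le> x j" "s \<le> \<bar>g\<bar> / (\<bar>a\<bar> + 1)" unfolding s_def using j(2) gp by auto
  define t where "t = - sgn g * s"
  have yn: "\<forall>i<n. 0 \<le> x i + t * d i"
  proof (intro allI impI)
    fix i assume "i < n"
    show "0 \<le> x i + t * d i"
    proof (cases "i = j")
      case True
      have "\<bar>t\<bar> = s" unfolding t_def using s gnz by (simp add: abs_mult abs_sgn_eq)
      then have "- t \<le> s" by (metis abs_ge_minus_self)
      then show ?thesis using True s(2) unfolding d_def by simp
    qed (use x(1) \<open>i<n\<close> in \<open>simp add: d_def\<close>)
  qed
  have c0: "0 \<le> 2 * t * g + t^2 * a"
  proof -
    have cc: "\<forall>x. (\<forall>i<n. 0 \<le> x i) \<longrightarrow> 0 \<le> bil n A x x" using cop copositive_iff[OF Ac] by simp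
    have "0 \<le> bil n A (\<lambda>i. x i + t * d i) (\<lambda>i. x i + t * d i)"
      using mp[OF spec[OF cc] yn] .
    then show ?thesis unfolding expand .
  qed
  have c1: "t * g = - (s * \<bar>g\<bar>)"
  proof -
    have e1: "sgn g * g = \<bar>g\<bar>" by (cases "g > 0") (auto simp: sgn_if)
    have "t * g = - (s * (sgn g * g))" unfolding t_def by (simp add: algebra_simps)
    then show ?thesis unfolding e1 .
  qed
  have c2: "t^2 * a = s^2 * a"
  proof -
    have "sgn g * sgn g = 1" using gnz by (simp add: sgn_if)
    moreover have "t^2 = (sgn g * sgn g) * s^2" unfolding t_def by (simp add: power2_eq_square algebra_simps)
    ultimately have "t^2 = s^2" by simp
    then show ?thesis by simp
  qed
  have c3: "s^2 * a \<le> s * \<bar>g\<bar>"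
  proof -
    have "s * (\<bar>a\<bar> + 1) \<le> \<bar>g\<bar>" using s(3) by (simp add: field_simps)
    then have "s * \<bar>a\<bar> \<le> \<bar>g\<bar>" using s(1) by (simp add: distrib_left)
    then have "s * (s * \<bar>a\<bar>) \<le> s * \<bar>g\<bar>" using s(1) by (intro mult_left_mono) auto
    moreover have "s^2 * a \<le> s * (s * \<bar>a\<bar>)"
    proof -
      have "a \<le> \<bar>a\<bar>" by simp
      then have "(s*s) * a \<le> (s*s) * \<bar>a\<bar>" using s(1) by (intro mult_left_mono) auto
      then show ?thesis by (simp add: power2_eq_square mult.assoc)
    qed
    ultimately show ?thesis by linarith
  qed
  have c4: "s * \<bar>g\<bar> > 0" using s gnz by simp
  have "2 * t * g = 2 * (t * g)" by simp
  then show False using c0 c1 c2 c3 c4 by linarith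
qed

lemma boundary_singular:
  assumes A: "A \<in> sym_boundary n (cop_cone n)" and n: "n \<ge> 1"
  shows "\<exists>I \<in> Isets n. det (submatrix (map_mat complex_of_real A) I I) = 0"
proof -
  have As: "A \<in> sym_real n" using A by (simp add: sym_boundary_def)
  then have Ac: "A \<in> carrier_mat n n" by (simp add: sym_real_def)
  have cop: "copositive n A" by (rule boundary_copositive[OF A])
  obtain x where x: "\<forall>i<n. 0 \<le> x i" "\<exists>i<n. x i \<noteq> 0" "bil n A x x = 0"
    using boundary_zero[OF A n] by blast
  define J where "J = {i. i < n \<and> x i > 0}"
  have J: "J \<subseteq> {..<n}" "J \<noteq> {}" using x(1,2) unfolding J_def by force+
  have Cc: "map_mat complex_of_real A \<in> carrier_mat n n" using Ac by simp
  have "det (submatrix (map_mat complex_of_real A) J J) = 0"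
    unfolding det_sub_zero_iff[OF Cc J(1)]
  proof (intro exI conjI ballI)
    let ?u = "\<lambda>j. complex_of_real (x j)"
    obtain i where "i \<in> J" using J(2) by blast
    then show "\<exists>j\<in>J. ?u j \<noteq> 0" unfolding J_def by force
    fix i assume i: "i \<in> J"
    have ent: "map_mat complex_of_real A $$ (i, j) = of_real (A $$ (i,j))" if "j \<in> J" for j
    proof -
      have "i < n" "j < n" using i that J(1) by auto
      then show ?thesis using Ac by simp
    qed
    have "(\<Sum>j\<in>J. map_mat complex_of_real A $$ (i, j) * ?u j) = of_real (\<Sum>j\<in>J. A $$ (i,j) * x j)"
      by (simp add: ent)
    also have "(\<Sum>j\<in>J. A $$ (i,j) * x j) = (\<Sum>l<n. A $$ (i,l) * x l)"
    proof (rule sum.mono_neutral_left)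
      show "\<forall>l\<in>{..<n} - J. A $$ (i,l) * x l = 0" using x(1) unfolding J_def by force
    qed (use J in auto)
    also have "\<dots> = 0" using boundary_gradient[OF As cop x(1) x(3)] i unfolding J_def by blast
    finally show "(\<Sum>j\<in>J. map_mat complex_of_real A $$ (i, j) * ?u j) = 0" by simp
  qed
  then show ?thesis using J by blast
qed

definition pz :: "(complex \<Rightarrow> complex) \<Rightarrow> bool" where
  "pz f \<longleftrightarrow> (\<exists>P. \<forall>z. f z = poly P z)"

lemma pz_const: "pz (\<lambda>z. c)"
  unfolding pz_def by (rule exI[of _ "[:c:]"]) simp

lemma pz_id: "pz (\<lambda>z. z)"
  unfolding pz_def by (rule exI[of _ "[:0,1:]"]) simp

lemma pz_add: "pz f \<Longrightarrow> pz g \<Longrightarrow> pz (\<lambda>z. f z + g z)"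
  unfolding pz_def by (metis poly_add)

lemma pz_mult: "pz f \<Longrightarrow> pz g \<Longrightarrow> pz (\<lambda>z. f z * g z)"
  unfolding pz_def by (metis poly_mult)

lemma pz_uminus: "pz f \<Longrightarrow> pz (\<lambda>z. - f z)"
  unfolding pz_def by (metis poly_minus)

lemma pz_if: "pz f \<Longrightarrow> pz g \<Longrightarrow> pz (\<lambda>z. if P then f z else g z)"
  by (cases P) simp_all

lemma pz_sum: "finite F \<Longrightarrow> (\<And>x. x \<in> F \<Longrightarrow> pz (f x)) \<Longrightarrow> pz (\<lambda>z. \<Sum>x\<in>F. f x z)"
proof (induction F rule: finite_induct)
  case empty
  then show ?case using pz_const[of 0] by simp
next
  case (insert x F)
  then show ?case using pz_add[of "f x" "\<lambda>z. \<Sum>x\<in>F. f x z"] by simp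
qed

lemma pz_poly_fun:
  assumes "p \<in> poly_fun n" and "\<And>i j. i < n \<Longrightarrow> j < n \<Longrightarrow> pz (\<lambda>z. F z $$ (i,j))"
  shows "pz (\<lambda>z. p (F z))"
  using assms(1)
proof (induction rule: poly_fun.induct)
  case (const c)
  then show ?case by (rule pz_const)
next
  case (var i j)
  then show ?case using assms(2) by simp
next
  case (add p q)
  from add.IH show ?case by (rule pz_add)
next
  case (mult p q)
  from mult.IH show ?case by (rule pz_mult)
qed

lemma pz_zero:
  assumes f: "pz f" and d: "\<delta> > 0" and z: "\<And>r. \<bar>r\<bar> < \<delta> \<Longrightarrow> f (of_real r) = 0"
  shows "f w = 0"
proof -
  obtain P where P: "\<And>z. f z = poly P z" using f unfolding pz_def by blast
  have "P = 0"
  proof (rule ccontr)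
    assume "P \<noteq> 0"
    then have fin: "finite {z. poly P z = 0}" by (rule poly_roots_finite)
    have "complex_of_real ` {-\<delta><..<\<delta>} \<subseteq> {z. poly P z = 0}"
      using z P by (auto simp: abs_less_iff)
    then have "finite (complex_of_real ` {-\<delta><..<\<delta>})" using fin finite_subset by blast
    moreover have "inj_on complex_of_real {-\<delta><..<\<delta>}" by (auto intro: inj_onI)
    ultimately have "finite {-\<delta><..<\<delta>}" using finite_image_iff by blast
    moreover have "infinite {-\<delta><..<\<delta>}" using d by (intro infinite_Ioo) simp
    ultimately show False by blast
  qed
  then show ?thesis using P by simp
qed

definition Ms :: "(nat \<Rightarrow> nat \<Rightarrow> 'a) \<Rightarrow> nat \<Rightarrow> nat \<Rightarrow> 'a" where
  "Ms M i j = M (min i j) (max i j)"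

lemma Ms_sym: "Ms M i j = Ms M j i"
  unfolding Ms_def by (simp add: min.commute max.commute)

definition phie :: "nat set \<Rightarrow> nat \<Rightarrow> (nat \<Rightarrow> nat \<Rightarrow> 'a::comm_ring_1) \<Rightarrow> (nat \<Rightarrow> 'a) \<Rightarrow> nat \<Rightarrow> nat \<Rightarrow> 'a" where
  "phie I k M w i j =
    (if i = k \<and> j = k then (\<Sum>a\<in>I-{k}. \<Sum>b\<in>I-{k}. Ms M a b * w a * w b)
     else if i = k \<and> j \<in> I-{k} then - (\<Sum>b\<in>I-{k}. Ms M j b * w b)
     else if j = k \<and> i \<in> I-{k} then - (\<Sum>b\<in>I-{k}. Ms M i b * w b)
     else Ms M i j)"

definition Phi :: "nat \<Rightarrow> nat set \<Rightarrow> nat \<Rightarrow> (nat \<Rightarrow> nat \<Rightarrow> 'a::comm_ring_1) \<Rightarrow> (nat \<Rightarrow> 'a) \<Rightarrow> 'a mat" where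
  "Phi n I k M w = Matrix.mat n n (\<lambda>(i,j). phie I k M w i j)"

definition uvec :: "nat set \<Rightarrow> nat \<Rightarrow> (nat \<Rightarrow> 'a::comm_ring_1) \<Rightarrow> nat \<Rightarrow> 'a" where
  "uvec I k w j = (if j = k then 1 else if j \<in> I - {k} then w j else 0)"

lemma Phi_carrier: "Phi n I k M w \<in> carrier_mat n n"
  unfolding Phi_def by simp

lemma Phi_index: "i < n \<Longrightarrow> j < n \<Longrightarrow> Phi n I k M w $$ (i,j) = phie I k M w i j"
  unfolding Phi_def by simp

lemma phie_sym: "phie I k M w i j = phie I k M w j i"
  unfolding phie_def by (auto simp: Ms_sym)

lemma phie_off: "i \<noteq> k \<Longrightarrow> j \<noteq> k \<Longrightarrow> phie I k M w i j = Ms M i j"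
  unfolding phie_def by auto

lemma phie_kernel:
  assumes fin: "finite I" and k: "k \<in> I" and i: "i \<in> I"
  shows "(\<Sum>j\<in>I. phie I k M w i j * uvec I k w j) = 0"
proof -
  let ?K = "I - {k}"
  have Ieq: "I = insert k ?K" using k by auto
  have finK: "finite ?K" using fin by simp
  have "(\<Sum>j\<in>I. phie I k M w i j * uvec I k w j) =
        phie I k M w i k + (\<Sum>j\<in>?K. phie I k M w i j * w j)"
    by (subst Ieq, subst sum.insert[OF finK]) (auto simp: uvec_def intro!: sum.cong)
  also have "\<dots> = 0"
  proof (cases "i = k")
    case True
    have "(\<Sum>j\<in>?K. phie I k M w i j * w j) = (\<Sum>j\<in>?K. - ((\<Sum>b\<in>?K. Ms M j b * w b) * w j))"
      using True by (intro sum.cong) (auto simp: phie_def)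
    also have "\<dots> = - (\<Sum>j\<in>?K. \<Sum>b\<in>?K. Ms M j b * w j * w b)"
      by (simp only: sum_negf sum_distrib_right) (simp add: mult_ac)
    finally have "(\<Sum>j\<in>?K. phie I k M w i j * w j) = - (\<Sum>j\<in>?K. \<Sum>b\<in>?K. Ms M j b * w j * w b)" .
    moreover have "phie I k M w i k = (\<Sum>a\<in>?K. \<Sum>b\<in>?K. Ms M a b * w a * w b)"
      using True by (simp add: phie_def)
    ultimately show ?thesis by simp
  next
    case False
    then have iK: "i \<in> ?K" using i by simp
    have "(\<Sum>j\<in>?K. phie I k M w i j * w j) = (\<Sum>j\<in>?K. Ms M i j * w j)"
      using False by (auto simp: phie_off intro!: sum.cong)
    moreover have "phie I k M w i k = - (\<Sum>b\<in>?K. Ms M i b * w b)"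
      using False iK by (simp add: phie_def)
    ultimately show ?thesis by simp
  qed
  finally show ?thesis .
qed

lemma Phi_of_real:
  "map_mat complex_of_real (Phi n I k M w) = Phi n I k (\<lambda>i j. complex_of_real (M i j)) (\<lambda>i. complex_of_real (w i))"
  by (rule eq_matI) (auto simp: Phi_def phie_def Ms_def)

lemma Phi_fix:
  fixes A :: "complex mat"
  assumes A: "A \<in> sym_complex n" and I: "I \<subseteq> {..<n}" and k: "k \<in> I"
    and ker: "\<And>i. i \<in> I \<Longrightarrow> (\<Sum>j\<in>I. A $$ (i,j) * uvec I k w j) = 0"
  shows "Phi n I k (\<lambda>i j. A $$ (i,j)) w = A"
proof -
  let ?K = "I - {k}"
  have Ac: "A \<in> carrier_mat n n" and AT: "A\<^sup>T = A" using A by (auto simp: sym_complex_def)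
  have sym: "A $$ (i,j) = A $$ (j,i)" if "i < n" "j < n" for i j
  proof -
    have "A\<^sup>T $$ (i,j) = A $$ (j,i)" using Ac that by simp
    then show ?thesis using AT by simp
  qed
  have fin: "finite I" using I finite_subset by blast
  have finK: "finite ?K" using fin by simp
  have In: "x \<in> I \<Longrightarrow> x < n" for x using I by auto
  have MsA: "Ms (\<lambda>i j. A $$ (i,j)) i j = A $$ (i,j)" if "i < n" "j < n" for i j
    unfolding Ms_def using sym[OF that] by (cases "i \<le> j") (auto simp: min_def max_def)
  have Ieq: "I = insert k ?K" using k by auto
  have kerK: "A $$ (i,k) = - (\<Sum>b\<in>?K. A $$ (i,b) * w b)" if "i \<in> I" for i
  proof -
    have "0 = (\<Sum>j\<in>I. A $$ (i,j) * uvec I k w j)" using ker[OF that] by simp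
    also have "\<dots> = A $$ (i,k) + (\<Sum>b\<in>?K. A $$ (i,b) * w b)"
      by (subst Ieq, subst sum.insert[OF finK]) (auto simp: uvec_def intro!: sum.cong)
    finally show ?thesis by (simp add: eq_neg_iff_add_eq_0 add.commute)
  qed
  show ?thesis
  proof (rule eq_matI)
    show "dim_row (Phi n I k (\<lambda>i j. A $$ (i,j)) w) = dim_row A" "dim_col (Phi n I k (\<lambda>i j. A $$ (i,j)) w) = dim_col A"
      using Ac by (auto simp: Phi_def)
    fix i j assume ij: "i < dim_row A" "j < dim_col A"
    then have ij': "i < n" "j < n" using Ac by auto
    have kn: "k < n" using In k by simp
    have main: "phie I k (\<lambda>i j. A $$ (i,j)) w i j = A $$ (i,j)"
    proof -
      consider (kk) "i = k \<and> j = k" | (kj) "i = k \<and> j \<in> ?K" | (ik) "j = k \<and> i \<in> ?K"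
        | (other) "\<not> (i = k \<and> j = k) \<and> \<not> (i = k \<and> j \<in> ?K) \<and> \<not> (j = k \<and> i \<in> ?K)" by blast
      then show ?thesis
      proof cases
        case kk
        have "A $$ (k,k) = - (\<Sum>b\<in>?K. A $$ (k,b) * w b)" using kerK[OF k] .
        also have "\<dots> = (\<Sum>b\<in>?K. (\<Sum>a\<in>?K. A $$ (b,a) * w a) * w b)"
        proof -
          have "A $$ (k,b) = - (\<Sum>a\<in>?K. A $$ (b,a) * w a)" if "b \<in> ?K" for b
            using sym[OF kn In[of b]] kerK[of b] that by auto
          then have "(\<Sum>b\<in>?K. A $$ (k,b) * w b) = (\<Sum>b\<in>?K. - ((\<Sum>a\<in>?K. A $$ (b,a) * w a) * w b))"
            by (intro sum.cong) auto
          then show ?thesis by (simp add: sum_negf)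
        qed
        also have "\<dots> = (\<Sum>a\<in>?K. \<Sum>b\<in>?K. Ms (\<lambda>i j. A $$ (i,j)) a b * w a * w b)"
        proof -
          have "(\<Sum>b\<in>?K. (\<Sum>a\<in>?K. A $$ (b,a) * w a) * w b) = (\<Sum>b\<in>?K. \<Sum>a\<in>?K. A $$ (b,a) * w a * w b)"
            by (simp add: sum_distrib_right)
          also have "\<dots> = (\<Sum>a\<in>?K. \<Sum>b\<in>?K. A $$ (b,a) * w a * w b)" by (rule sum.swap)
          also have "\<dots> = (\<Sum>a\<in>?K. \<Sum>b\<in>?K. Ms (\<lambda>i j. A $$ (i,j)) a b * w a * w b)"
            by (intro sum.cong refl) (auto simp: MsA In sym)
          finally show ?thesis .
        qed
        finally show ?thesis using kk by (simp add: phie_def)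
      next
        case kj
        have "A $$ (i,j) = A $$ (j,k)" using kj sym ij' by simp
        also have "\<dots> = - (\<Sum>b\<in>?K. A $$ (j,b) * w b)" using kerK kj by simp
        also have "\<dots> = - (\<Sum>b\<in>?K. Ms (\<lambda>i j. A $$ (i,j)) j b * w b)"
          using kj by (auto simp: MsA In ij' intro!: sum.cong)
        finally show ?thesis using kj by (simp add: phie_def)
      next
        case ik
        have "A $$ (i,j) = - (\<Sum>b\<in>?K. A $$ (i,b) * w b)" using kerK ik by simp
        also have "\<dots> = - (\<Sum>b\<in>?K. Ms (\<lambda>i j. A $$ (i,j)) i b * w b)"
          using ik by (auto simp: MsA In ij' intro!: sum.cong)
        finally show ?thesis using ik by (auto simp: phie_def)
      next
        case other
        then show ?thesis unfolding phie_def using MsA[OF ij'] by auto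
      qed
    qed
    show "Phi n I k (\<lambda>i j. A $$ (i,j)) w $$ (i,j) = A $$ (i,j)"
      using main ij' by (simp add: Phi_index)
  qed
qed

lemma pz_phie:
  assumes "finite I"
  shows "pz (\<lambda>z. phie I k (\<lambda>i j. a i j + z * b i j) (\<lambda>i. c i + z * e i) i j)"
  unfolding phie_def Ms_def
  using assms by (intro pz_if pz_add pz_mult pz_const pz_id pz_sum pz_uminus) auto


lemma Phi_sym_real:
  fixes M :: "nat \<Rightarrow> nat \<Rightarrow> real"
  shows "Phi n I k M w \<in> sym_real n"
proof -
  have "(Phi n I k M w)\<^sup>T = Phi n I k M w"
  proof (rule eq_matI)
    fix i j assume "i < dim_row (Phi n I k M w)" "j < dim_col (Phi n I k M w)"
    then have "i < n" "j < n" by (simp_all add: Phi_def)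
    then show "(Phi n I k M w)\<^sup>T $$ (i,j) = Phi n I k M w $$ (i,j)"
      by (simp add: Phi_def phie_sym[of I k M w j i])
  qed (simp_all add: Phi_def)
  then show ?thesis unfolding sym_real_def using Phi_carrier by blast
qed

lemma Phi_row:
  fixes M :: "nat \<Rightarrow> nat \<Rightarrow> real"
  assumes I: "I \<subseteq> {..<n}" and k: "k \<in> I" and i: "i < n"
  shows "(\<Sum>j<n. Phi n I k M w $$ (i,j) * uvec I k w j) =
         (if i \<in> I then 0 else (\<Sum>j\<in>I. Ms M i j * uvec I k w j))"
proof -
  have fin: "finite I" using I finite_subset by blast
  have "(\<Sum>j<n. Phi n I k M w $$ (i,j) * uvec I k w j) = (\<Sum>j<n. phie I k M w i j * uvec I k w j)"
    using i by (intro sum.cong) (auto simp: Phi_index)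
  also have "\<dots> = (\<Sum>j\<in>I. phie I k M w i j * uvec I k w j)"
  proof (rule sum.mono_neutral_right)
    show "\<forall>j\<in>{..<n} - I. phie I k M w i j * uvec I k w j = 0" using k by (auto simp: uvec_def)
  qed (use I in auto)
  also have "\<dots> = (if i \<in> I then 0 else (\<Sum>j\<in>I. Ms M i j * uvec I k w j))"
  proof (cases "i \<in> I")
    case True
    then show ?thesis using phie_kernel[OF fin k True] by simp
  next
    case False
    then have "i \<noteq> k" using k by auto
    then have "phie I k M w i j = Ms M i j" for j using False unfolding phie_def by auto
    then show ?thesis using False by simp
  qed
  finally show ?thesis .
qed

lemma Phi_in_boundary:
  fixes M :: "nat \<Rightarrow> nat \<Rightarrow> real"
  assumes I: "I \<subseteq> {..<n}" and k: "k \<in> I"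
    and Mpos: "\<And>i j. i < n \<Longrightarrow> j < n \<Longrightarrow> 0 \<le> Ms M i j"
    and wpos: "\<And>i. i < n \<Longrightarrow> 0 \<le> w i"
    and psd: "\<And>y. y k = 0 \<Longrightarrow> 0 \<le> (\<Sum>i<n. \<Sum>j<n. y i * Ms M i j * y j)"
  shows "Phi n I k M w \<in> sym_boundary n (cop_cone n)"
proof -
  let ?A = "Phi n I k M w"
  let ?u = "uvec I k w"
  have kn: "k < n" using I k by auto
  have As: "?A \<in> sym_real n" by (rule Phi_sym_real)
  have Ac: "?A \<in> carrier_mat n n" by (rule Phi_carrier)
  have sym: "\<And>i j. i < n \<Longrightarrow> j < n \<Longrightarrow> ?A $$ (i,j) = ?A $$ (j,i)"
    using sym_real_sym[OF As] by blast
  have upos: "i < n \<Longrightarrow> 0 \<le> ?u i" for i using wpos by (simp add: uvec_def)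
  have uoff: "i \<notin> I \<Longrightarrow> ?u i = 0" for i using k by (auto simp: uvec_def)
  define v where "v i = (\<Sum>j<n. ?A $$ (i,j) * ?u j)" for i
  have vI: "i < n \<Longrightarrow> i \<in> I \<Longrightarrow> v i = 0" for i unfolding v_def using Phi_row[OF I k] by simp
  have vpos: "i < n \<Longrightarrow> 0 \<le> v i" for i
    unfolding v_def using Phi_row[OF I k, of i M w] Mpos I upos
    by (auto intro!: sum_nonneg mult_nonneg_nonneg)
  have byu: "bil n ?A y ?u = (\<Sum>i<n. y i * v i)" for y unfolding bil_row v_def ..
  have buu: "bil n ?A ?u ?u = 0" unfolding byu
    by (rule sum.neutral) (metis lessThan_iff mult_eq_0_iff vI uoff)
  have cop: "copositive n ?A" unfolding copositive_iff[OF Ac]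
  proof (intro allI impI)
    fix x :: "nat \<Rightarrow> real" assume x: "\<forall>i<n. 0 \<le> x i"
    define t where "t = x k"
    define y where "y i = x i - t * ?u i" for i
    have t: "0 \<le> t" using x kn unfolding t_def by simp
    have yk: "y k = 0" unfolding y_def t_def by (simp add: uvec_def)
    have "bil n ?A x x = bil n ?A (\<lambda>i. y i + t * ?u i) (\<lambda>i. y i + t * ?u i)"
      by (rule bil_cong) (simp_all add: y_def)
    also have "\<dots> = bil n ?A y y + t * bil n ?A y ?u + (t * bil n ?A ?u y + t * (t * bil n ?A ?u ?u))"
      by (simp only: bil_add_left bil_add_right bil_scale_left bil_scale_right add.assoc)
    also have "bil n ?A ?u y = bil n ?A y ?u" by (rule bil_sym[OF sym])
    finally have ex: "bil n ?A x x = bil n ?A y y + 2 * t * bil n ?A y ?u" using buu by simp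
    have "0 \<le> bil n ?A y ?u" unfolding byu
    proof (rule sum_nonneg)
      fix i assume i: "i \<in> {..<n}"
      show "0 \<le> y i * v i"
      proof (cases "i \<in> I")
        case True then show ?thesis using vI i by simp
      next
        case False then show ?thesis using vpos i x uoff by (simp add: y_def)
      qed
    qed
    moreover have "0 \<le> bil n ?A y y"
    proof -
      have "bil n ?A y y = (\<Sum>i<n. \<Sum>j<n. y i * Ms M i j * y j)"
        unfolding bil_def
      proof (intro sum.cong refl)
        fix i j assume "i \<in> {..<n}" "j \<in> {..<n}"
        then show "y i * ?A $$ (i,j) * y j = y i * Ms M i j * y j"
          using yk by (cases "i = k \<or> j = k") (auto simp: Phi_index phie_off)
      qed
      then show ?thesis using psd[of y, OF yk] by simp
    qed
    ultimately show "0 \<le> bil n ?A x x" unfolding ex using t by simp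
  qed
  have inC: "?A \<in> cop_cone n" using As cop by (simp add: cop_cone_def)
  show ?thesis unfolding sym_boundary_def
  proof (intro CollectI conjI allI impI As)
    fix e :: real assume e: "e > 0"
    show "\<exists>B\<in>cop_cone n. \<forall>i<n. \<forall>j<n. \<bar>B $$ (i,j) - ?A $$ (i,j)\<bar> < e"
      using inC e by (intro bexI[of _ ?A]) auto
    define B where "B = Matrix.mat n n (\<lambda>(i,j). ?A $$ (i,j) - (if i = j then e/2 else 0))"
    have Bc: "B \<in> carrier_mat n n" unfolding B_def by simp
    have Bi: "i < n \<Longrightarrow> j < n \<Longrightarrow> B $$ (i,j) = ?A $$ (i,j) - (if i = j then e/2 else 0)" for i j
      unfolding B_def by simp
    have Bs: "B \<in> sym_real n" unfolding sym_real_def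
      using Bc by (auto intro!: eq_matI simp: Bi sym)
    have hsum: "(\<Sum>i<n. \<Sum>j<n. (if i = j then e/2 * (?u i * ?u j) else 0)) = e/2 * (\<Sum>i<n. ?u i * ?u i)"
      by (simp add: sum_distrib_left)
    have "bil n B ?u ?u = (\<Sum>i<n. \<Sum>j<n. ?u i * ?A $$ (i,j) * ?u j - (if i = j then e/2 * (?u i * ?u j) else 0))"
      unfolding bil_def by (intro sum.cong refl) (case_tac "x = xa", simp_all add: Bi algebra_simps)
    also have "\<dots> = bil n ?A ?u ?u - (\<Sum>i<n. \<Sum>j<n. (if i = j then e/2 * (?u i * ?u j) else 0))"
      unfolding bil_def by (simp only: sum_subtractf)
    also have "\<dots> = - (e/2 * (\<Sum>i<n. ?u i * ?u i))" unfolding hsum buu by simp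
    also have "\<dots> < 0"
    proof -
      have "?u k * ?u k \<le> (\<Sum>i<n. ?u i * ?u i)" using kn by (intro member_le_sum) auto
      then have "1 \<le> (\<Sum>i<n. ?u i * ?u i)" by (simp add: uvec_def)
      then show ?thesis using e by simp
    qed
    finally have "\<not> copositive n B" unfolding copositive_iff[OF Bc] using upos by (auto simp: not_le)
    then have "B \<in> sym_real n - cop_cone n" using Bs by (simp add: cop_cone_def)
    moreover have "\<forall>i<n. \<forall>j<n. \<bar>B $$ (i,j) - ?A $$ (i,j)\<bar> < e" using e by (simp add: Bi)
    ultimately show "\<exists>B\<in>sym_real n - cop_cone n. \<forall>i<n. \<forall>j<n. \<bar>B $$ (i,j) - ?A $$ (i,j)\<bar> < e"
      by blast
  qed
qed
definition M0 :: "nat \<Rightarrow> nat \<Rightarrow> real" where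
  "M0 i j = 1 + (if i = j then 1 else 0)"

lemma sq_bound:
  fixes y :: "nat \<Rightarrow> real"
  assumes "i < n" "j < n"
  shows "\<bar>y i\<bar> * \<bar>y j\<bar> \<le> 2 * (\<Sum>l<n. y l * y l)"
proof -
  have a: "y i * y i \<le> (\<Sum>l<n. y l * y l)" using assms(1) by (intro member_le_sum) auto
  have b: "y j * y j \<le> (\<Sum>l<n. y l * y l)" using assms(2) by (intro member_le_sum) auto
  have "2 * (\<bar>y i\<bar> * \<bar>y j\<bar>) \<le> y i * y i + y j * y j"
  proof -
    have "0 \<le> (\<bar>y i\<bar> - \<bar>y j\<bar>)^2" by simp
    then show ?thesis by (simp add: power2_eq_square algebra_simps abs_mult_self_eq)
  qed
  moreover have "0 \<le> y i * y i" by simp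
  ultimately show ?thesis using a b by linarith
qed

lemma line_boundary:
  fixes D :: "nat \<Rightarrow> nat \<Rightarrow> real" and d :: "nat \<Rightarrow> real"
  assumes I: "I \<subseteq> {..<n}" and k: "k \<in> I"
  shows "\<exists>\<delta>>0. \<forall>r. \<bar>r\<bar> < \<delta> \<longrightarrow>
    Phi n I k (\<lambda>i j. M0 i j + r * D i j) (\<lambda>i. 1 + r * d i) \<in> sym_boundary n (cop_cone n)"
proof -
  define E where "E i j = Ms D i j" for i j
  define SD where "SD = (\<Sum>i<n. \<Sum>j<n. \<bar>E i j\<bar>)"
  define Sd where "Sd = (\<Sum>i<n. \<bar>d i\<bar>)"
  have SD0: "0 \<le> SD" unfolding SD_def by (intro sum_nonneg) auto
  have Sd0: "0 \<le> Sd" unfolding Sd_def by (intro sum_nonneg) auto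
  have Eb: "\<bar>E i j\<bar> \<le> SD" if "i < n" "j < n" for i j
  proof -
    have "\<bar>E i j\<bar> \<le> (\<Sum>j<n. \<bar>E i j\<bar>)" using that by (intro member_le_sum) auto
    also have "\<dots> \<le> SD" unfolding SD_def using that
      by (intro member_le_sum[of i "{..<n}" "\<lambda>i. \<Sum>j<n. \<bar>E i j\<bar>"]) (auto intro: sum_nonneg)
    finally show ?thesis .
  qed
  have db: "\<bar>d i\<bar> \<le> Sd" if "i < n" for i
    unfolding Sd_def using that by (intro member_le_sum) auto
  define \<delta> where "\<delta> = 1 / (2 * (1 + SD + Sd))"
  have dpos: "\<delta> > 0" unfolding \<delta>_def using SD0 Sd0 by simp
  show ?thesis
  proof (intro exI[of _ \<delta>] conjI allI impI dpos)
    fix r :: real assume r: "\<bar>r\<bar> < \<delta>"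
    have hr: "\<bar>r\<bar> * (2 * (1 + SD + Sd)) < 1"
      using r SD0 Sd0 unfolding \<delta>_def by (simp add: field_simps)
    have e: "\<bar>r\<bar> * (2 * (1 + SD + Sd)) = 2 * \<bar>r\<bar> + 2 * (\<bar>r\<bar> * SD) + 2 * (\<bar>r\<bar> * Sd)"
      by (simp add: algebra_simps)
    have p1: "0 \<le> \<bar>r\<bar> * SD" "0 \<le> \<bar>r\<bar> * Sd" using SD0 Sd0 by simp_all
    have r1: "\<bar>r\<bar> * SD * 2 \<le> 1" using hr e p1 by linarith
    have r2: "\<bar>r\<bar> * Sd < 1" using hr e p1 by linarith
    let ?M = "\<lambda>i j. M0 i j + r * D i j"
    let ?w = "\<lambda>i. 1 + r * d i"
    have MsM: "Ms ?M i j = 1 + (if i = j then 1 else 0) + r * E i j" for i j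
      unfolding Ms_def E_def M0_def by (auto simp: min_def max_def)
    have rE: "- (1/2) \<le> r * E i j" if "i < n" "j < n" for i j
    proof -
      have "\<bar>r * E i j\<bar> \<le> \<bar>r\<bar> * SD" unfolding abs_mult using Eb[OF that] by (intro mult_left_mono) auto
      then show ?thesis using r1 by linarith
    qed
    show "Phi n I k ?M ?w \<in> sym_boundary n (cop_cone n)"
    proof (rule Phi_in_boundary[OF I k])
      fix i j assume ij: "i < n" "j < n"
      show "0 \<le> Ms ?M i j" unfolding MsM using rE[OF ij] by (cases "i = j") auto
    next
      fix i assume i: "i < n"
      have "\<bar>r * d i\<bar> \<le> \<bar>r\<bar> * Sd" unfolding abs_mult using db[OF i] by (intro mult_left_mono) auto
      then show "0 \<le> 1 + r * d i" using r2 by linarith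
    next
      fix y :: "nat \<Rightarrow> real"
      define S2 where "S2 = (\<Sum>l<n. y l * y l)"
      have S20: "0 \<le> S2" unfolding S2_def by (intro sum_nonneg) auto
      define T where "T = (\<Sum>i<n. \<Sum>j<n. y i * E i j * y j)"
      have sq: "(\<Sum>i<n. y i)^2 = (\<Sum>i<n. \<Sum>j<n. y i * y j)"
        unfolding power2_eq_square by (rule sum_product)
      have "(\<Sum>i<n. \<Sum>j<n. y i * Ms ?M i j * y j) =
            (\<Sum>i<n. \<Sum>j<n. y i * y j + (if i = j then y i * y j else 0) + r * (y i * E i j * y j))"
        unfolding MsM by (intro sum.cong refl) (simp add: algebra_simps)
      also have "\<dots> = (\<Sum>i<n. y i)^2 + S2 + r * T"
        unfolding S2_def T_def sq by (simp add: sum.distrib sum_distrib_left)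
      finally have Q: "(\<Sum>i<n. \<Sum>j<n. y i * Ms ?M i j * y j) = (\<Sum>i<n. y i)^2 + S2 + r * T" .
      have Tb: "\<bar>T\<bar> \<le> SD * (2 * S2)"
      proof -
        have "\<bar>T\<bar> \<le> (\<Sum>i<n. \<Sum>j<n. \<bar>y i * E i j * y j\<bar>)"
          unfolding T_def by (rule order_trans[OF sum_abs]) (intro sum_mono sum_abs)
        also have "\<dots> \<le> (\<Sum>i<n. \<Sum>j<n. \<bar>E i j\<bar> * (2 * S2))"
        proof (intro sum_mono)
          fix i j assume "i \<in> {..<n}" "j \<in> {..<n}"
          then have "\<bar>y i\<bar> * \<bar>y j\<bar> \<le> 2 * S2" unfolding S2_def by (intro sq_bound) auto
          then have "\<bar>E i j\<bar> * (\<bar>y i\<bar> * \<bar>y j\<bar>) \<le> \<bar>E i j\<bar> * (2 * S2)" by (intro mult_left_mono) auto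
          then show "\<bar>y i * E i j * y j\<bar> \<le> \<bar>E i j\<bar> * (2 * S2)" by (simp add: abs_mult mult_ac)
        qed
        also have "\<dots> = SD * (2 * S2)" unfolding SD_def by (simp add: sum_distrib_right)
        finally show ?thesis .
      qed
      have "\<bar>r * T\<bar> \<le> \<bar>r\<bar> * (SD * (2 * S2))" unfolding abs_mult using Tb by (intro mult_left_mono) auto
      also have "\<dots> = (\<bar>r\<bar> * SD * 2) * S2" by (simp add: mult_ac)
      also have "\<dots> \<le> 1 * S2" using r1 S20 by (intro mult_right_mono) auto
      finally have "\<bar>r * T\<bar> \<le> S2" by simp
      then show "0 \<le> (\<Sum>i<n. \<Sum>j<n. y i * Ms ?M i j * y j)" unfolding Q
        using zero_le_power2[of "\<Sum>i<n. y i"] by linarith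
    qed
  qed
qed

lemma vanish_real:
  assumes p: "p \<in> poly_fun n"
    and hp: "\<And>B. B \<in> sym_boundary n (cop_cone n) \<Longrightarrow> p (map_mat complex_of_real B) = 0"
    and I: "I \<subseteq> {..<n}" and k: "k \<in> I"
  shows "p (Phi n I k (\<lambda>i j. complex_of_real (M i j)) (\<lambda>i. complex_of_real (w i))) = 0"
proof -
  have fin: "finite I" using I finite_subset by blast
  define D where "D i j = M i j - M0 i j" for i j
  define d where "d i = w i - 1" for i
  obtain \<delta> where \<delta>: "\<delta> > 0" "\<And>r. \<bar>r\<bar> < \<delta> \<Longrightarrow>
    Phi n I k (\<lambda>i j. M0 i j + r * D i j) (\<lambda>i. 1 + r * d i) \<in> sym_boundary n (cop_cone n)"
    using line_boundary[OF I k, of D d] by blast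
  define F where "F z = Phi n I k (\<lambda>i j. complex_of_real (M0 i j) + z * complex_of_real (D i j))
                              (\<lambda>i. 1 + z * complex_of_real (d i))" for z
  have pzF: "pz (\<lambda>z. p (F z))"
  proof (rule pz_poly_fun[OF p])
    fix i j assume ij: "i < n" "j < n"
    show "pz (\<lambda>z. F z $$ (i,j))" unfolding F_def Phi_index[OF ij]
      using pz_phie[OF fin, of k "\<lambda>i j. complex_of_real (M0 i j)" "\<lambda>i j. complex_of_real (D i j)"
          "\<lambda>i. 1" "\<lambda>i. complex_of_real (d i)" i j] by simp
  qed
  have "p (F z) = 0" for z
  proof (rule pz_zero[OF pzF \<delta>(1)])
    fix r :: real assume r: "\<bar>r\<bar> < \<delta>"
    have "F (complex_of_real r) = map_mat complex_of_real (Phi n I k (\<lambda>i j. M0 i j + r * D i j) (\<lambda>i. 1 + r * d i))"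
      unfolding Phi_of_real F_def by simp
    then show "p (F (complex_of_real r)) = 0" using hp[OF \<delta>(2)[OF r]] by simp
  qed
  moreover have "F 1 = Phi n I k (\<lambda>i j. complex_of_real (M i j)) (\<lambda>i. complex_of_real (w i))"
  proof -
    have "(\<lambda>i j. complex_of_real (M0 i j) + 1 * complex_of_real (D i j)) = (\<lambda>i j. complex_of_real (M i j))"
      by (simp add: D_def flip: of_real_add)
    moreover have "(\<lambda>i. 1 + 1 * complex_of_real (d i)) = (\<lambda>i. complex_of_real (w i))"
      by (simp add: d_def)
    ultimately show ?thesis unfolding F_def by simp
  qed
  ultimately show ?thesis by metis
qed

lemma vanish_complex:
  assumes p: "p \<in> poly_fun n"
    and hp: "\<And>B. B \<in> sym_boundary n (cop_cone n) \<Longrightarrow> p (map_mat complex_of_real B) = 0"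
    and I: "I \<subseteq> {..<n}" and k: "k \<in> I"
  shows "p (Phi n I k M w) = 0"
proof -
  have fin: "finite I" using I finite_subset by blast
  define F where "F z = Phi n I k (\<lambda>i j. complex_of_real (Re (M i j)) + z * complex_of_real (Im (M i j)))
                              (\<lambda>i. complex_of_real (Re (w i)) + z * complex_of_real (Im (w i)))" for z
  have pzF: "pz (\<lambda>z. p (F z))"
  proof (rule pz_poly_fun[OF p])
    fix i j assume ij: "i < n" "j < n"
    show "pz (\<lambda>z. F z $$ (i,j))" unfolding F_def Phi_index[OF ij]
      by (rule pz_phie[OF fin])
  qed
  have "p (F z) = 0" for z
  proof (rule pz_zero[OF pzF, of 1])
    fix r :: real
    have "F (complex_of_real r) = Phi n I k (\<lambda>i j. complex_of_real (Re (M i j) + r * Im (M i j)))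
                              (\<lambda>i. complex_of_real (Re (w i) + r * Im (w i)))"
      unfolding F_def by simp
    then show "p (F (complex_of_real r)) = 0"
      using vanish_real[OF p hp I k, of "\<lambda>i j. Re (M i j) + r * Im (M i j)" "\<lambda>i. Re (w i) + r * Im (w i)"]
      by simp
  qed simp
  moreover have "F \<i> = Phi n I k M w"
  proof -
    have "(\<lambda>i j. complex_of_real (Re (M i j)) + \<i> * complex_of_real (Im (M i j))) = M"
      using complex_eq by (auto intro!: ext)
    moreover have "(\<lambda>i. complex_of_real (Re (w i)) + \<i> * complex_of_real (Im (w i))) = w"
      using complex_eq by (auto intro!: ext)
    ultimately show ?thesis unfolding F_def by simp
  qed
  ultimately show ?thesis by metis
qed

lemma H_sub:
  assumes A: "A \<in> sym_complex n"
    and pr: "(\<Prod>I \<in> Isets n. det (submatrix A I I)) = 0"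
    and p: "p \<in> poly_fun n"
    and hp: "\<And>B. B \<in> sym_boundary n (cop_cone n) \<Longrightarrow> p (map_mat complex_of_real B) = 0"
  shows "p A = 0"
proof -
  have Ac: "A \<in> carrier_mat n n" using A by (simp add: sym_complex_def)
  obtain I where I: "I \<in> Isets n" "det (submatrix A I I) = 0"
    using prod_zero_iff[OF finite_Isets[of n], of "\<lambda>I. det (submatrix A I I)"] pr by blast
  have Isub: "I \<subseteq> {..<n}" using I(1) by simp
  obtain u where u: "\<exists>j\<in>I. u j \<noteq> 0" and ker: "\<And>i. i \<in> I \<Longrightarrow> (\<Sum>j\<in>I. A $$ (i,j) * u j) = 0"
    using iffD1[OF det_sub_zero_iff[OF Ac Isub] I(2)] by blast
  obtain k where k: "k \<in> I" "u k \<noteq> 0" using u by blast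
  define w where "w l = u l / u k" for l
  have uv: "uvec I k w l = u l / u k" if "l \<in> I" for l
    using that k(2) by (auto simp: uvec_def w_def)
  have ker': "(\<Sum>j\<in>I. A $$ (i,j) * uvec I k w j) = 0" if "i \<in> I" for i
  proof -
    have "(\<Sum>j\<in>I. A $$ (i,j) * uvec I k w j) = (\<Sum>j\<in>I. A $$ (i,j) * u j / u k)"
      by (intro sum.cong refl) (simp add: uv)
    also have "\<dots> = (\<Sum>j\<in>I. A $$ (i,j) * u j) / u k" by (rule sum_divide_distrib[symmetric])
    finally have "(\<Sum>j\<in>I. A $$ (i,j) * uvec I k w j) = (\<Sum>j\<in>I. A $$ (i,j) * u j) / u k" .
    then show ?thesis using ker[OF that] by simp
  qed
  have "Phi n I k (\<lambda>i j. A $$ (i,j)) w = A" by (rule Phi_fix[OF A Isub k(1) ker'])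
  moreover have "p (Phi n I k (\<lambda>i j. A $$ (i,j)) w) = 0" by (rule vanish_complex[OF p hp Isub k(1)])
  ultimately show ?thesis by simp
qed

theorem mainTheorem16:
  fixes n :: nat
  assumes "n \<ge> 1"
  shows "zariski_closure n (map_mat complex_of_real ` sym_boundary n (cop_cone n)) =
         {A \<in> sym_complex n.
            (\<Prod>I \<in> {I. I \<subseteq> {..<n} \<and> I \<noteq> {}}. det (submatrix A I I)) = 0}"
proof -
  let ?S = "map_mat complex_of_real ` sym_boundary n (cop_cone n)"
  let ?H = "{A \<in> sym_complex n. (\<Prod>I \<in> Isets n. det (submatrix A I I)) = 0}"
  have SH: "?S \<subseteq> ?H"
  proof
    fix C assume "C \<in> ?S"
    then obtain B where B: "B \<in> sym_boundary n (cop_cone n)" "C = map_mat complex_of_real B" by blast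
    have Bs: "B \<in> sym_real n" using B(1) by (simp add: sym_boundary_def)
    then have "C \<in> sym_complex n" using B(2) by (auto simp: sym_real_def sym_complex_def map_mat_transpose)
    moreover have "(\<Prod>I \<in> Isets n. det (submatrix C I I)) = 0"
      using boundary_singular[OF B(1) assms] B(2) finite_Isets prod_zero_iff by blast
    ultimately show "C \<in> ?H" by blast
  qed
  show ?thesis
  proof
    show "zariski_closure n ?S \<subseteq> ?H"
      unfolding zariski_closure_def using H_closed[of n] SH by blast
  next
    show "?H \<subseteq> zariski_closure n ?S"
      unfolding zariski_closure_def
    proof (intro subsetI InterI)
      fix A V assume A: "A \<in> ?H" and V: "V \<in> {V. zariski_closed n V \<and> ?S \<subseteq> V}"
      obtain P where P: "P \<subseteq> poly_fun n" "V = {A \<in> sym_complex n. \<forall>p\<in>P. p A = 0}"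
        using V unfolding zariski_closed_def by blast
      have "\<forall>p\<in>P. p A = 0"
      proof
        fix p assume pP: "p \<in> P"
        have hp: "p (map_mat complex_of_real B) = 0" if "B \<in> sym_boundary n (cop_cone n)" for B
        proof -
          have "map_mat complex_of_real B \<in> V" using V that by blast
          then show ?thesis using P(2) pP by blast
        qed
        show "p A = 0" using H_sub[of A n p] A pP P(1) hp by blast
      qed
      then show "A \<in> V" using A P(2) by blast
    qed
  qed
qed

end
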